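(* Let $m\ge 2$ and $1\le\ell<m$. The algorithm that, given an $\ell$-truncated election, returns a candidate with the highest $\mathrm{worst}$ Minimax score (defined in the context) approximates the Minimax rule within a factor of $$\frac{1}{(m-\ell)\left(1+\frac{\ell^2}{m^2-\ell^2-m+\ell}\right)}\ \ge\ \frac{1}{m-\ell/2};$$ that is, for every election $E$, the returned candidate $w$ satisfies $\mathrm{sc}_{\mathrm{MM}}(w)\ge\frac{1}{(m-\ell)\left(1+\frac{\ell^2}{m^2-\ell^2-m+\ell}\right)}\max_{c\in C}\mathrm{sc}_{\mathrm{MM}}(c)$, and moreover $(m-\ell)\left(1+\frac{\ell^2}{m^2-\ell^2-m+\ell}\right)\le m-\ell/2$.
   Context: An election consists of a set $V$ of $n$ voters and a set $C$ of $m$ candidates; each voter $v$ has a strict linear order $\succ_v$ over $C$. For $c,c'\in C$, $\mathrm{sc}_{\mathrm{MM}}(c,c')=|\{v: c\succ_v c'\}|$ and $\mathrm{sc}_{\mathrm{MM}}(c)=\min_{c'\neq c}\mathrm{sc}_{\mathrm{MM}}(c,c')$. In the $\ell$-truncated election each voter reveals only the ordered list of her top $\ell$ candidates. For a voter $v$ and candidates $c\neq d$, write $c\succ_v^t d$ if $c$ is among $v$'s top $\ell$ candidates and either $d$ is not among them or $c\succ_v d$. The worst Minimax score is $\mathrm{worst}(c)=\min_{c'\neq c}|\{v\in V: c\succ_v^t c'\}|$ (the Minimax score of $c$ when $c$ is placed last by every voter not listing it) and the best Minimax score is $\mathrm{best}(c)=\min_{c'\neq c}\big(n-|\{v\in V: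 c'\succ_v^t c\}|\big)$. *)

theory Defs
  imports Complex_Main
begin

text \<open>A voter's strict linear order over C is a list enumerating C without repetition,
  best candidate first.\<close>
definition is_ranking :: "'c set \<Rightarrow> 'c list \<Rightarrow> bool" where
  "is_ranking C p \<longleftrightarrow> distinct p \<and> set p = C"

definition prefers :: "'c list \<Rightarrow> 'c \<Rightarrow> 'c \<Rightarrow> bool" where
  "prefers p c d \<longleftrightarrow> (\<exists>i j. i < j \<and> j < length p \<and> p ! i = c \<and> p ! j = d)"

definition tprefers :: "nat \<Rightarrow> 'c list \<Rightarrow> 'c \<Rightarrow> 'c \<Rightarrow> bool" where
  "tprefers l p c d \<longleftrightarrow> c \<in> set (take l p) \<and> (d \<notin> set (take l p) \<or> prefers p c d)"

definition sc_pair :: "'v set \<Rightarrow> ('v \<Rightarrow> 'c list) \<Rightarrow> 'c \<Rightarrow> 'c \<Rightarrow> nat" where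
  "sc_pair V P c c' = card {v \<in> V. prefers (P v) c c'}"

definition sc_MM :: "'v set \<Rightarrow> 'c set \<Rightarrow> ('v \<Rightarrow> 'c list) \<Rightarrow> 'c \<Rightarrow> nat" where
  "sc_MM V C P c = Min ((\<lambda>c'. sc_pair V P c c') ` (C - {c}))"

definition worst_MM :: "nat \<Rightarrow> 'v set \<Rightarrow> 'c set \<Rightarrow> ('v \<Rightarrow> 'c list) \<Rightarrow> 'c \<Rightarrow> nat" where
  "worst_MM l V C P c = Min ((\<lambda>c'. card {v \<in> V. tprefers l (P v) c c'}) ` (C - {c}))"

end

theory Submission
  imports Defs
begin

lemma in_take_nth:
  assumes "x \<in> set (take l p)"
  obtains i where "i < l" "i < length p" "p ! i = x"
  using assms by (auto simp: in_set_conv_nth)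

lemma nth_in_take:
  assumes "i < l" "i < length p"
  shows "p ! i \<in> set (take l p)"
  using assms by (metis in_set_conv_nth length_take min_less_iff_conj nth_take)

lemma tpref_imp_pref:
  assumes "distinct p" "d \<in> set p" "c \<noteq> d" "tprefers l p c d"
  shows "prefers p c d"
proof -
  from assms(4) have c: "c \<in> set (take l p)" and dd: "d \<notin> set (take l p) \<or> prefers p c d"
    unfolding tprefers_def by auto
  obtain i where i: "i < l" "i < length p" "p ! i = c" using in_take_nth[OF c] by blast
  obtain j where j: "j < length p" "p ! j = d" using assms(2) by (auto simp: in_set_conv_nth)
  show ?thesis
  proof (cases "d \<in> set (take l p)")
    case True then show ?thesis using dd by auto
  next
    case False
    then have "\<not> j < l" using j nth_in_take by metis
    then have "i < j" using i by simp
    then show ?thesis unfolding prefers_def using i j by blast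
  qed
qed

lemma pref_not_tpref:
  assumes "distinct p" "prefers p c d"
  shows "\<not> tprefers l p d c"
proof
  assume t: "tprefers l p d c"
  obtain i j where ij: "i < j" "j < length p" "p ! i = c" "p ! j = d"
    using assms(2) unfolding prefers_def by blast
  from t have d: "d \<in> set (take l p)" unfolding tprefers_def by auto
  obtain j' where j': "j' < l" "j' < length p" "p ! j' = d" using in_take_nth[OF d] by blast
  have "j' = j" using j' ij assms(1) nth_eq_iff_index_eq by metis
  then have "c \<in> set (take l p)" using ij j' nth_in_take[of i l p] by simp
  then have "prefers p d c" using t unfolding tprefers_def by auto
  then obtain a b where ab: "a < b" "b < length p" "p ! a = d" "p ! b = c"
    unfolding prefers_def by blast
  have "a = j" using ab ij assms(1) nth_eq_iff_index_eq by (metis order.strict_trans)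
  moreover have "b = i" using ab ij assms(1) nth_eq_iff_index_eq by (metis order.strict_trans)
  ultimately show False using ab ij by simp
qed

lemma top_tpref:
  assumes "distinct p" "1 \<le> l" "d \<in> set p" "d \<noteq> p ! 0"
  shows "tprefers l p (p ! 0) d"
proof -
  have ne: "0 < length p" using assms(3) by (cases p) auto
  have c: "p ! 0 \<in> set (take l p)" using nth_in_take[of 0 l p] ne assms(2) by simp
  obtain j where j: "j < length p" "p ! j = d" using assms(3) by (auto simp: in_set_conv_nth)
  have "j \<noteq> 0" using j assms(4) by (cases "j = 0") auto
  then have "0 < j" by simp
  then have "prefers p (p ! 0) d" unfolding prefers_def using j by blast
  then show ?thesis unfolding tprefers_def using c by blast
qed

lemma min_img_obtain:
  assumes "finite A" "A \<noteq> {}"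
  obtains a where "a \<in> A" "Min (f ` A) = f a"
proof -
  have "Min (f ` A) \<in> f ` A" using assms by (intro Min_in) auto
  then show ?thesis using that by auto
qed


lemma card_filter_sum:
  assumes "finite V"
  shows "card {v\<in>V. Q v} = (\<Sum>v\<in>V. if Q v then 1 else 0 :: nat)"
  using assms by (simp add: sum.inter_filter[symmetric])

lemma real_part:
  fixes m l :: nat and M s S :: real
  assumes "m \<ge> 2" "1 \<le> l" "l < m"
    and key: "(real l + real m - 1) * M \<le> (real m ^ 2 - real m + real l) * s"
    and sS: "s \<le> S"
  shows "S \<ge> (1 / ((real m - real l) * (1 + real l ^ 2 /
              (real m ^ 2 - real l ^ 2 - real m + real l)))) * M
         \<and> (real m - real l) * (1 + real l ^ 2 /
              (real m ^ 2 - real l ^ 2 - real m + real l)) \<le> real m - real l / 2"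
proof -
  define D where "D = real m ^ 2 - real l ^ 2 - real m + real l"
  have lm: "real l + 1 \<le> real m" using assms by simp
  have l1: "1 \<le> real l" using assms by simp
  have Deq: "D = (real m - real l) * (real m + real l - 1)"
    unfolding D_def by (simp add: algebra_simps power2_eq_square)
  have p1: "real m - real l > 0" using lm by simp
  have p2: "real m + real l - 1 > 0" using lm l1 by simp
  have Dpos: "D > 0" unfolding Deq using p1 p2 by simp
  define f where "f = (real m - real l) * (1 + real l ^ 2 / D)"
  have feq: "f = (real m ^ 2 - real m + real l) / (real m + real l - 1)"
  proof -
    have "(real m - real l) * (real l ^ 2 / D) = real l ^ 2 / (real m + real l - 1)"
      unfolding Deq using p1 p2 by simp
    then have "f = (real m - real l) + real l ^ 2 / (real m + real l - 1)"
      unfolding f_def by (simp add: distrib_left)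
    also have "\<dots> = ((real m - real l) * (real m + real l - 1) + real l ^ 2) / (real m + real l - 1)"
      using p2 by (simp add: field_simps)
    also have "(real m - real l) * (real m + real l - 1) + real l ^ 2 = real m ^ 2 - real m + real l"
      by (simp add: algebra_simps power2_eq_square)
    finally show ?thesis .
  qed
  have fpos: "f > 0" unfolding f_def using p1 Dpos by (simp add: add_pos_nonneg)
  have "M / f = (real m + real l - 1) * M / (real m ^ 2 - real m + real l)"
    unfolding feq by simp
  also have "\<dots> \<le> s"
  proof -
    have q: "real m ^ 2 - real m + real l > 0" using fpos feq p2
      by (simp add: zero_less_divide_iff)
    show ?thesis using key q by (simp add: divide_le_eq algebra_simps)
  qed
  finally have A: "1 / f * M \<le> S" using sS by simp
  have "f \<le> real m - real l / 2"
  proof -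
    have nn: "real l * (real m - real l - 1) \<ge> 0" using lm l1 by simp
    have "real m ^ 2 - real m + real l \<le> (real m - real l / 2) * (real m + real l - 1)"
    proof -
      have "(real m - real l / 2) * (real m + real l - 1) - (real m ^ 2 - real m + real l)
            = real l * (real m - real l - 1) / 2"
        by (simp add: algebra_simps power2_eq_square)
      then show ?thesis using nn by linarith
    qed
    then show ?thesis unfolding feq using p2 by (simp add: divide_le_eq)
  qed
  then show ?thesis using A unfolding f_def D_def by simp
qed


theorem theorem8:
  fixes V :: "'v set" and C :: "'c set" and P :: "'v \<Rightarrow> 'c list"
    and m l :: nat and w :: 'c
  assumes "finite V" and "finite C" and "card C = m"
    and "m \<ge> 2" and "1 \<le> l" and "l < m"
    and "\<forall>v\<in>V. is_ranking C (P v)"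
    and "w \<in> C"
    and "\<forall>c\<in>C. worst_MM l V C P c \<le> worst_MM l V C P w"
  shows "real (sc_MM V C P w) \<ge>
           (1 / ((real m - real l) * (1 + real l ^ 2 /
              (real m ^ 2 - real l ^ 2 - real m + real l))))
           * real (Max (sc_MM V C P ` C))
         \<and> (real m - real l) * (1 + real l ^ 2 /
              (real m ^ 2 - real l ^ 2 - real m + real l)) \<le> real m - real l / 2"
proof -
  note finV = assms(1) and finC = assms(2)
  have dist: "\<And>v. v \<in> V \<Longrightarrow> distinct (P v)" and setP: "\<And>v. v \<in> V \<Longrightarrow> set (P v) = C"
    using assms(7) unfolding is_ranking_def by auto
  have lenP: "\<And>v. v \<in> V \<Longrightarrow> length (P v) = m"
    using dist setP assms(3) distinct_card by metis
  have cardCD: "\<And>c. c \<in> C \<Longrightarrow> card (C - {c}) = m - 1"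
    using assms(3) finC by simp
  have CD: "\<And>c. c \<in> C \<Longrightarrow> C - {c} \<noteq> {}"
    using cardCD assms(4) by (metis card.empty diff_is_0_eq le_numeral_extra(4)
        not_numeral_le_zero one_le_numeral order_trans numeral_le_one_iff semiring_norm(69))
  have finCD: "\<And>c. finite (C - {c})" using finC by simp
  define s where "s = worst_MM l V C P w"
  define n where "n = card V"
  have Cne: "C \<noteq> {}" using assms(8) by auto
  have "Max (sc_MM V C P ` C) \<in> sc_MM V C P ` C" using finC Cne by (intro Max_in) auto
  then obtain cs where cs: "cs \<in> C" "Max (sc_MM V C P ` C) = sc_MM V C P cs" by auto
  define M where "M = sc_MM V C P cs"
  define B where "B = {v\<in>V. cs \<notin> set (take l (P v))}"
  define b where "b = card B"
  have finB: "finite B" unfolding B_def using finV by simp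
  have Mle: "\<And>d. d \<in> C - {cs} \<Longrightarrow> M \<le> sc_pair V P cs d"
    unfolding M_def sc_MM_def using finCD by (intro Min_le) auto
  have ws: "\<And>c. c \<in> C \<Longrightarrow> worst_MM l V C P c \<le> s" using assms(9) s_def by auto
  have F1: "M \<le> s + b"
  proof -
    obtain d0 where d0: "d0 \<in> C - {cs}"
      "worst_MM l V C P cs = card {v\<in>V. tprefers l (P v) cs d0}"
      using min_img_obtain[OF finCD CD[OF cs(1)], of "\<lambda>c'. card {v\<in>V. tprefers l (P v) cs c'}"]
      unfolding worst_MM_def by blast
    have "{v\<in>V. prefers (P v) cs d0} \<subseteq> {v\<in>V. tprefers l (P v) cs d0} \<union> B"
      by (auto simp: tprefers_def B_def)
    then have "sc_pair V P cs d0 \<le> card ({v\<in>V. tprefers l (P v) cs d0} \<union> B)"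
      unfolding sc_pair_def using finV finB by (intro card_mono) auto
    also have "\<dots> \<le> card {v\<in>V. tprefers l (P v) cs d0} + b"
      unfolding b_def by (rule card_Un_le)
    finally show ?thesis using Mle[OF d0(1)] d0(2) ws[OF cs(1)] by linarith
  qed
  define T where "T d = card {v\<in>V. tprefers l (P v) d cs}" for d
  have MT: "\<And>d. d \<in> C - {cs} \<Longrightarrow> M + T d \<le> n"
  proof -
    fix d assume d: "d \<in> C - {cs}"
    have disj: "{v\<in>V. prefers (P v) cs d} \<inter> {v\<in>V. tprefers l (P v) d cs} = {}"
      using pref_not_tpref[OF dist] by blast
    have "sc_pair V P cs d + T d = card ({v\<in>V. prefers (P v) cs d} \<union> {v\<in>V. tprefers l (P v) d cs})"
      unfolding sc_pair_def T_def using finV disj by (simp add: card_Un_disjoint)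
    also have "\<dots> \<le> n" unfolding n_def using finV by (intro card_mono) auto
    finally show "M + T d \<le> n" using Mle[OF d] by linarith
  qed
  have sumT: "l * b \<le> (\<Sum>d\<in>C-{cs}. T d)"
  proof -
    have "(\<Sum>d\<in>C-{cs}. T d) = (\<Sum>d\<in>C-{cs}. \<Sum>v\<in>V. if tprefers l (P v) d cs then 1 else 0)"
      unfolding T_def using finV by (simp add: card_filter_sum)
    also have "\<dots> = (\<Sum>v\<in>V. \<Sum>d\<in>C-{cs}. if tprefers l (P v) d cs then 1 else 0)"
      by (rule sum.swap)
    also have "\<dots> = (\<Sum>v\<in>V. card {d\<in>C-{cs}. tprefers l (P v) d cs})"
      by (simp only: card_filter_sum[OF finCD])
    also have "\<dots> \<ge> (\<Sum>v\<in>B. card {d\<in>C-{cs}. tprefers l (P v) d cs})"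
      using finV by (intro sum_mono2) (auto simp: B_def)
    moreover have "(\<Sum>v\<in>B. card {d\<in>C-{cs}. tprefers l (P v) d cs}) \<ge> (\<Sum>v\<in>B. l)"
    proof (rule sum_mono)
      fix v assume v: "v \<in> B"
      then have vV: "v \<in> V" and nc: "cs \<notin> set (take l (P v))" unfolding B_def by auto
      have "card (set (take l (P v))) = l"
        using dist[OF vV] lenP[OF vV] assms(6) by (simp add: distinct_card)
      moreover have "set (take l (P v)) \<subseteq> {d\<in>C-{cs}. tprefers l (P v) d cs}"
        using nc setP[OF vV] set_take_subset[of l "P v"] by (auto simp: tprefers_def)
      ultimately show "l \<le> card {d\<in>C-{cs}. tprefers l (P v) d cs}"
        using finCD by (metis (no_types, lifting) card_mono finite_Diff finite_subset mem_Collect_eq subsetI finC)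
    qed
    ultimately have "card B * l \<le> (\<Sum>d\<in>C-{cs}. T d)"
      using sum_constant[of l B, unfolded of_nat_id] by linarith
    then show ?thesis unfolding b_def by (simp add: mult.commute)
  qed
  have F2: "(m - 1) * M + l * b \<le> (m - 1) * n"
  proof -
    have "(\<Sum>d\<in>C-{cs}. M + T d) \<le> (\<Sum>d\<in>C-{cs}. n)" using MT by (rule sum_mono)
    then have "(m - 1) * M + (\<Sum>d\<in>C-{cs}. T d) \<le> (m - 1) * n"
      using cardCD[OF cs(1)] by (simp add: sum.distrib)
    then show ?thesis using sumT by linarith
  qed
  have F3: "n \<le> m * s"
  proof -
    have "V \<subseteq> (\<Union>c\<in>C. {v\<in>V. P v ! 0 = c})"
    proof
      fix v assume v: "v \<in> V"
      have "P v ! 0 \<in> set (P v)" using lenP[OF v] assms(4) by simp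
      then show "v \<in> (\<Union>c\<in>C. {v\<in>V. P v ! 0 = c})" using v setP[OF v] by auto
    qed
    then have "n \<le> card (\<Union>c\<in>C. {v\<in>V. P v ! 0 = c})"
      unfolding n_def using finV finC by (intro card_mono) auto
    also have "\<dots> \<le> (\<Sum>c\<in>C. card {v\<in>V. P v ! 0 = c})" by (rule card_UN_le[OF finC])
    also have "\<dots> \<le> (\<Sum>c\<in>C. s)"
    proof (rule sum_mono)
      fix c assume c: "c \<in> C"
      obtain d where d: "d \<in> C - {c}"
        "worst_MM l V C P c = card {v\<in>V. tprefers l (P v) c d}"
        using min_img_obtain[OF finCD CD[OF c], of "\<lambda>c'. card {v\<in>V. tprefers l (P v) c c'}"]
        unfolding worst_MM_def by blast
      have "{v\<in>V. P v ! 0 = c} \<subseteq> {v\<in>V. tprefers l (P v) c d}"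
      proof
        fix v assume v: "v \<in> {v\<in>V. P v ! 0 = c}"
        then have vV: "v \<in> V" and c0: "P v ! 0 = c" by auto
        have "tprefers l (P v) (P v ! 0) d"
          using top_tpref[OF dist[OF vV] assms(5)] d c0 setP[OF vV] by auto
        then show "v \<in> {v\<in>V. tprefers l (P v) c d}" using vV c0 by simp
      qed
      then have "card {v\<in>V. P v ! 0 = c} \<le> card {v\<in>V. tprefers l (P v) c d}"
        using finV by (intro card_mono) auto
      then show "card {v\<in>V. P v ! 0 = c} \<le> s" using d(2) ws[OF c] by linarith
    qed
    finally show ?thesis using assms(3) by simp
  qed
  have F4: "s \<le> sc_MM V C P w"
  proof -
    obtain d where d: "d \<in> C - {w}" "sc_MM V C P w = sc_pair V P w d"
      using min_img_obtain[OF finCD CD[OF assms(8)], of "\<lambda>c'. sc_pair V P w c'"]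
      unfolding sc_MM_def by blast
    have "s \<le> card {v\<in>V. tprefers l (P v) w d}"
      unfolding s_def worst_MM_def using d(1) finCD by (intro Min_le) auto
    also have "\<dots> \<le> sc_pair V P w d"
    proof -
      have "{v\<in>V. tprefers l (P v) w d} \<subseteq> {v\<in>V. prefers (P v) w d}"
      proof
        fix v assume v: "v \<in> {v\<in>V. tprefers l (P v) w d}"
        then have vV: "v \<in> V" by simp
        have "d \<in> set (P v)" "w \<noteq> d" using setP[OF vV] d(1) by auto
        then show "v \<in> {v\<in>V. prefers (P v) w d}"
          using tpref_imp_pref[OF dist[OF vV]] v by blast
      qed
      then show ?thesis unfolding sc_pair_def using finV by (intro card_mono) auto
    qed
    finally show ?thesis using d(2) by simp
  qed
  have keyn: "(l + (m - 1)) * M \<le> l * s + (m - 1) * (m * s)"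
  proof -
    have "l * M \<le> l * s + l * b" using F1 by (metis add_mult_distrib2 mult_le_mono2)
    then have "l * M + (m - 1) * M \<le> l * s + (m - 1) * n" using F2 by linarith
    also have "(m - 1) * n \<le> (m - 1) * (m * s)" using F3 by simp
    finally show ?thesis by (simp add: add_mult_distrib)
  qed
  have key: "(real l + real m - 1) * real M \<le> (real m ^ 2 - real m + real l) * real s"
  proof -
    have "real ((l + (m - 1)) * M) \<le> real (l * s + (m - 1) * (m * s))"
      using keyn by (simp only: of_nat_le_iff)
    moreover have m1: "1 \<le> m" using assms(4) by simp
    have "real ((l + (m - 1)) * M) = (real l + real m - 1) * real M"
      by (simp only: of_nat_mult of_nat_add of_nat_diff[OF m1] of_nat_1) (simp add: algebra_simps)
    moreover have "real (l * s + (m - 1) * (m * s)) = (real m ^ 2 - real m + real l) * real s"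
      by (simp only: of_nat_mult of_nat_add of_nat_diff[OF m1] of_nat_1)
        (simp add: algebra_simps power2_eq_square)
    ultimately show ?thesis by linarith
  qed
  have "real s \<le> real (sc_MM V C P w)" using F4 by simp
  from real_part[OF assms(4) assms(5) assms(6) key this]
  show ?thesis using cs(2) M_def by simp
qed

end
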